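(* Let $(X,d,\mu)$ be a metric measure space, $Y$ a complete metric space, $p\ge1$ and $u\in N^{1,p}_{loc}(X,Y)$. Then $p$-almost every Lipschitz curve $\gamma:[0,1]\to X$ is $(u,p)$-regular.
   Context: A metric measure space is a proper metric space with a Borel regular outer measure positive and finite on balls. $\operatorname{Mod}_p\Gamma=\inf\int\rho^pd\mu$ over Borel $\rho\ge0$ with $\int_\gamma\rho\ge1$ on $\Gamma$; "$p$-almost every curve" means outside a family of $p$-modulus zero. $N^{1,p}_{loc}(X,Y)$ is the space of locally $p$-Newtonian maps (defined via an isometric embedding of $Y$ into a Banach space). Let $\overline\Gamma(X)$ be the set of Lipschitz curves $[0,1]\to X$ with the metric $d_\infty(\alpha,\beta)=\sup_{t}d(\alpha(t),\beta(t))$, and $B(\gamma,\delta)$ the open $d_\infty$-ball in $\overline\Gamma(X)$. For $\Gamma\subset\overline\Gamma(X)$, $ess\ell_{u,p}(\Gamma):=\sup_{\operatorname{Mod}_p\Gamma_0=0}\inf\{\ell(u\circ\gamma):\gamma\in\Gamma\setminus\Gamma_0\}$, $\inf\emptyset=\infty$. A curve $\gamma\in\overline\Gamma(X)$ is $(u,p)$-regular if $u\circ\gamma$ is absolutely continuous and $ess\ell_{u,p}B(\gamma,\delta)\le\ell(u\circ\gamma)$ for every $\delta>0$. *)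

theory Defs
  imports "HOL-Analysis.Analysis"
begin

text \<open>The space X is the whole type 'a. The measure mu is (the Borel restriction of)
 a Borel regular outer measure; mu-measurable sets are those of the completion.\<close>

definition proper_space :: "'a::metric_space itself \<Rightarrow> bool" where
  "proper_space _ \<longleftrightarrow> (\<forall>S::'a set. bounded S \<and> closed S \<longrightarrow> compact S)"

definition metric_measure_space :: "'a::metric_space measure \<Rightarrow> bool" where
  "metric_measure_space \<mu> \<longleftrightarrow> proper_space TYPE('a) \<and> sets \<mu> = sets borel \<and>
     (\<forall>x r. r > 0 \<longrightarrow> 0 < emeasure \<mu> (ball x r) \<and> emeasure \<mu> (ball x r) < \<infinity>)"

definition enn_powr :: "ennreal \<Rightarrow> real \<Rightarrow> ennreal" where
  "enn_powr x q = (if x = \<infinity> then \<infinity> else ennreal (enn2real x powr q))"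

text \<open>Lipschitz curves [0,1] -> X (values outside [0,1] are irrelevant).\<close>
definition lip_curve :: "(real \<Rightarrow> 'a::metric_space) \<Rightarrow> bool" where
  "lip_curve \<gamma> \<longleftrightarrow> (\<exists>L. L-lipschitz_on {0..1} \<gamma>)"

definition curve_length :: "real \<Rightarrow> real \<Rightarrow> (real \<Rightarrow> 'b::metric_space) \<Rightarrow> ennreal" where
  "curve_length a b c =
     (SUP nt \<in> {(n::nat, t::nat \<Rightarrow> real). t 0 = a \<and> t n = b \<and> (\<forall>i<n. t i \<le> t (Suc i))}.
        \<Sum>i<fst nt. ennreal (dist (c (snd nt (Suc i))) (c (snd nt i))))"

definition abs_continuous_on :: "real set \<Rightarrow> (real \<Rightarrow> 'b::metric_space) \<Rightarrow> bool" where
  "abs_continuous_on S c \<longleftrightarrow>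
     (\<forall>\<epsilon>>0. \<exists>\<delta>>0. \<forall>(n::nat) (a::nat \<Rightarrow> real) b.
        (\<forall>i<n. a i \<le> b i \<and> {a i..b i} \<subseteq> S) \<and>
        disjoint_family_on (\<lambda>i. {a i<..<b i}) {..<n} \<and>
        (\<Sum>i<n. b i - a i) < \<delta>
        \<longrightarrow> (\<Sum>i<n. dist (c (b i)) (c (a i))) < \<epsilon>)"

text \<open>Metric derivative (the limit exists a.e. for Lipschitz curves; limsup is used so
 that the definition is total).\<close>
definition metric_deriv :: "(real \<Rightarrow> 'a::metric_space) \<Rightarrow> real \<Rightarrow> ennreal" where
  "metric_deriv \<gamma> t = Limsup (at t within {0..1}) (\<lambda>s. ennreal (dist (\<gamma> s) (\<gamma> t) / \<bar>s - t\<bar>))"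

definition line_integral :: "('a::metric_space \<Rightarrow> ennreal) \<Rightarrow> (real \<Rightarrow> 'a) \<Rightarrow> ennreal" where
  "line_integral \<rho> \<gamma> = (\<integral>\<^sup>+ t \<in> {0..1}. \<rho> (\<gamma> t) * metric_deriv \<gamma> t \<partial>lborel)"

definition modulus :: "'a::metric_space measure \<Rightarrow> real \<Rightarrow> (real \<Rightarrow> 'a) set \<Rightarrow> ennreal" where
  "modulus \<mu> p \<Gamma> = (INF \<rho> \<in> {\<rho>. \<rho> \<in> borel_measurable borel \<and> (\<forall>\<gamma>\<in>\<Gamma>. 1 \<le> line_integral \<rho> \<gamma>)}.
       \<integral>\<^sup>+ x. enn_powr (\<rho> x) p \<partial>\<mu>)"

definition strongly_measurable :: "'a measure \<Rightarrow> ('a \<Rightarrow> 'c::real_normed_vector) \<Rightarrow> bool" where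
  "strongly_measurable M f \<longleftrightarrow>
     (\<exists>s::nat \<Rightarrow> 'a \<Rightarrow> 'c. (\<forall>n. finite (s n ` space M) \<and> (\<forall>v. s n -` {v} \<inter> space M \<in> sets M)) \<and>
        (AE x in M. (\<lambda>n. s n x) \<longlonglongrightarrow> f x))"

text \<open>rho is an upper gradient of f on U: for all (Lipschitz, equivalently rectifiable) curves in U.\<close>
definition upper_gradient :: "'a::metric_space set \<Rightarrow> ('a \<Rightarrow> 'c::metric_space) \<Rightarrow> ('a \<Rightarrow> ennreal) \<Rightarrow> bool" where
  "upper_gradient U f \<rho> \<longleftrightarrow>
     (\<forall>\<gamma>. lip_curve \<gamma> \<and> \<gamma> ` {0..1} \<subseteq> U \<longrightarrow> ennreal (dist (f (\<gamma> 1)) (f (\<gamma> 0))) \<le> line_integral \<rho> \<gamma>)"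

text \<open>f in N^{1,p}(U,V), V a Banach space (the function class, not equivalence classes).\<close>
definition newtonian :: "'a::metric_space measure \<Rightarrow> real \<Rightarrow> 'a set \<Rightarrow> ('a \<Rightarrow> 'c::banach) \<Rightarrow> bool" where
  "newtonian \<mu> p U f \<longleftrightarrow>
     strongly_measurable (restrict_space (completion \<mu>) U) f \<and>
     (\<integral>\<^sup>+ x \<in> U. enn_powr (ennreal (norm (f x))) p \<partial>completion \<mu>) < \<infinity> \<and>
     (\<exists>\<rho>. \<rho> \<in> borel_measurable borel \<and> upper_gradient U f \<rho> \<and>
          (\<integral>\<^sup>+ x \<in> U. enn_powr (\<rho> x) p \<partial>\<mu>) < \<infinity>)"

definition newtonian_loc :: "'a::metric_space measure \<Rightarrow> real \<Rightarrow> ('a \<Rightarrow> 'c::banach) \<Rightarrow> bool" where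
  "newtonian_loc \<mu> p f \<longleftrightarrow> (\<forall>x. \<exists>r>0. newtonian \<mu> p (ball x r) f)"

definition isometric :: "('b::metric_space \<Rightarrow> 'c::metric_space) \<Rightarrow> bool" where
  "isometric \<iota> \<longleftrightarrow> (\<forall>a b. dist (\<iota> a) (\<iota> b) = dist a b)"

definition curve_ball :: "(real \<Rightarrow> 'a::metric_space) \<Rightarrow> real \<Rightarrow> (real \<Rightarrow> 'a) set" where
  "curve_ball \<gamma> \<delta> = {\<beta>. lip_curve \<beta> \<and> (SUP t\<in>{0..1}. dist (\<gamma> t) (\<beta> t)) < \<delta>}"

definition ess_length :: "'a::metric_space measure \<Rightarrow> real \<Rightarrow> ('a \<Rightarrow> 'b::metric_space) \<Rightarrow> (real \<Rightarrow> 'a) set \<Rightarrow> ennreal" where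
  "ess_length \<mu> p u \<Gamma> = (SUP \<Gamma>0 \<in> {\<Gamma>0. modulus \<mu> p \<Gamma>0 = 0}.
       INF \<gamma> \<in> \<Gamma> - \<Gamma>0. curve_length 0 1 (u \<circ> \<gamma>))"

definition regular_curve :: "'a::metric_space measure \<Rightarrow> real \<Rightarrow> ('a \<Rightarrow> 'b::metric_space) \<Rightarrow> (real \<Rightarrow> 'a) \<Rightarrow> bool" where
  "regular_curve \<mu> p u \<gamma> \<longleftrightarrow> lip_curve \<gamma> \<and> abs_continuous_on {0..1} (u \<circ> \<gamma>) \<and>
     (\<forall>\<delta>>0. ess_length \<mu> p u (curve_ball \<gamma> \<delta>) \<le> curve_length 0 1 (u \<circ> \<gamma>))"

end

theory Submission
  imports Defs
begin

lemma enn_powr_mono: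
  assumes "x \<le> y" "p \<ge> 0" shows "enn_powr x p \<le> enn_powr y p"
proof (cases "y = \<infinity>")
  case True then show ?thesis by (simp add: enn_powr_def)
next
  case False
  then have "x \<noteq> \<infinity>" using assms top.extremum_unique by fastforce
  moreover have "enn2real x \<le> enn2real y" using assms False by (simp add: enn2real_mono top.not_eq_extremum)
  ultimately show ?thesis using False assms
    by (simp add: enn_powr_def powr_mono2)
qed

lemma enn_powr_zero[simp]: "p > 0 \<Longrightarrow> enn_powr 0 p = 0"
  by (simp add: enn_powr_def)

lemma enn_powr_measurable[measurable]:
  assumes [measurable]: "f \<in> borel_measurable M" shows "(\<lambda>x. enn_powr (f x) p) \<in> borel_measurable M"
  unfolding enn_powr_def by measurable

lemma enn_powr_indicator:
  "p > 0 \<Longrightarrow> enn_powr (f x * indicator A x) p = enn_powr (f x) p * indicator A x"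
  by (simp add: indicator_def)

lemma enn_powr_cmult:
  assumes "k > 0" "p > 0"
  shows "enn_powr (ennreal k * y) p = ennreal (k powr p) * enn_powr y p"
proof (cases "y = \<infinity>")
  case True
  then show ?thesis using assms by (simp add: enn_powr_def ennreal_mult_top)
next
  case False
  then obtain r where r: "r \<ge> 0" "y = ennreal r" by (cases y) auto
  then show ?thesis using assms
    by (simp add: enn_powr_def powr_mult ennreal_mult[symmetric] del: ennreal_mult')
qed

lemma enn_powr_SUP_le_suminf:
  fixes a :: "nat \<Rightarrow> ennreal"
  assumes p: "p > 0"
  shows "enn_powr (SUP i. a i) p \<le> (\<Sum>i. enn_powr (a i) p)"
proof (cases "(\<Sum>i. enn_powr (a i) p) = \<infinity>")
  case True then show ?thesis by simp
next
  case False
  define S where "S = (\<Sum>i. enn_powr (a i) p)"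
  have Sfin: "S \<noteq> \<infinity>" using False S_def by auto
  define s where "s = enn2real S"
  have Ss: "S = ennreal s" "s \<ge> 0" using Sfin unfolding s_def by (cases S; simp)+
  have le: "enn_powr (a i) p \<le> S" for i unfolding S_def
    using ennreal_suminf_lessD linorder_not_less by blast
  have ai: "a i \<le> ennreal (s powr (1/p))" for i
  proof -
    have "a i \<noteq> \<infinity>" using le[of i] Sfin by (auto simp: enn_powr_def top_unique)
    then obtain r where r: "r \<ge> 0" "a i = ennreal r" by (cases "a i") auto
    have "r powr p \<le> s" using le[of i] r Ss by (simp add: enn_powr_def)
    then have "(r powr p) powr (1/p) \<le> s powr (1/p)" using r p by (simp add: powr_mono2)
    then have "r \<le> s powr (1/p)" using r p by (simp add: powr_powr)
    then show ?thesis using r by simp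
  qed
  then have "(SUP i. a i) \<le> ennreal (s powr (1/p))" by (simp add: SUP_le_iff)
  then have "enn_powr (SUP i. a i) p \<le> enn_powr (ennreal (s powr (1/p))) p"
    using p by (intro enn_powr_mono) auto
  also have "\<dots> = ennreal s" using p Ss by (simp add: enn_powr_def powr_powr)
  finally show ?thesis using Ss S_def by simp
qed

lemma modulus_le:
  assumes "\<rho> \<in> borel_measurable borel" "\<And>\<gamma>. \<gamma> \<in> \<Gamma> \<Longrightarrow> 1 \<le> line_integral \<rho> \<gamma>"
  shows "modulus \<mu> p \<Gamma> \<le> (\<integral>\<^sup>+ x. enn_powr (\<rho> x) p \<partial>\<mu>)"
  unfolding modulus_def using assms by (intro INF_lower) auto

lemma modulus_mono:
  assumes "\<Gamma> \<subseteq> \<Gamma>'" shows "modulus \<mu> p \<Gamma> \<le> modulus \<mu> p \<Gamma>'"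
  unfolding modulus_def using assms by (intro INF_superset_mono) auto

lemma modulus_zeroD:
  assumes "modulus \<mu> p \<Gamma> = 0" "e > 0"
  obtains \<rho> where "\<rho> \<in> borel_measurable borel" "\<And>\<gamma>. \<gamma> \<in> \<Gamma> \<Longrightarrow> 1 \<le> line_integral \<rho> \<gamma>"
    "(\<integral>\<^sup>+ x. enn_powr (\<rho> x) p \<partial>\<mu>) < e"
proof -
  have "modulus \<mu> p \<Gamma> < e" using assms by simp
  then show ?thesis unfolding modulus_def INF_less_iff using that by auto
qed

lemma modulus_zeroI:
  assumes "\<And>e::real. e > 0 \<Longrightarrow> \<exists>\<rho>. \<rho> \<in> borel_measurable borel \<and> (\<forall>\<gamma>\<in>\<Gamma>. 1 \<le> line_integral \<rho> \<gamma>) \<and>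
    (\<integral>\<^sup>+ x. enn_powr (\<rho> x) p \<partial>\<mu>) \<le> ennreal e"
  shows "modulus \<mu> p \<Gamma> = 0"
proof -
  have "modulus \<mu> p \<Gamma> \<le> 0"
  proof (rule ennreal_le_epsilon)
    fix e :: real assume "0 < e"
    then obtain \<rho> where "\<rho> \<in> borel_measurable borel" "\<forall>\<gamma>\<in>\<Gamma>. 1 \<le> line_integral \<rho> \<gamma>"
      "(\<integral>\<^sup>+ x. enn_powr (\<rho> x) p \<partial>\<mu>) \<le> ennreal e" using assms by blast
    then show "modulus \<mu> p \<Gamma> \<le> 0 + ennreal e"
      using modulus_le[of \<rho> \<Gamma> \<mu> p] by (simp add: order_trans)
  qed
  then show ?thesis by simp
qed

lemma line_integral_mono:
  assumes "\<And>x. \<rho> x \<le> \<rho>' x" shows "line_integral \<rho> \<gamma> \<le> line_integral \<rho>' \<gamma>"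
  unfolding line_integral_def
  by (intro nn_integral_mono mult_right_mono assms) auto

lemma modulus_Union_nat:
  assumes mm: "sets \<mu> = sets borel" and p: "p > 0" and Z: "\<And>i::nat. modulus \<mu> p (\<Gamma> i) = 0"
  shows "modulus \<mu> p (\<Union>i. \<Gamma> i) = 0"
proof (rule modulus_zeroI)
  fix e :: real assume e: "e > 0"
  have "\<exists>\<rho>. \<rho> \<in> borel_measurable borel \<and> (\<forall>\<gamma>\<in>\<Gamma> i. 1 \<le> line_integral \<rho> \<gamma>) \<and>
      (\<integral>\<^sup>+ x. enn_powr (\<rho> x) p \<partial>\<mu>) < ennreal (e * (1/2)^Suc i)" for i
    using modulus_zeroD[OF Z[of i], of "ennreal (e * (1/2)^Suc i)"] e by (smt (verit) ennreal_eq_0_iff not_gr_zero zero_less_divide_1_iff zero_less_numeral zero_less_power mult_pos_pos)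
  then obtain \<rho> where \<rho>: "\<And>i. \<rho> i \<in> borel_measurable borel" "\<And>i. \<forall>\<gamma>\<in>\<Gamma> i. 1 \<le> line_integral (\<rho> i) \<gamma>"
    "\<And>i. (\<integral>\<^sup>+ x. enn_powr (\<rho> i x) p \<partial>\<mu>) < ennreal (e * (1/2)^Suc i)" by metis
  define R where "R x = (SUP i. \<rho> i x)" for x
  have Rm: "R \<in> borel_measurable borel" unfolding R_def using \<rho>(1) by measurable
  have "\<forall>\<gamma>\<in>(\<Union>i. \<Gamma> i). 1 \<le> line_integral R \<gamma>"
  proof
    fix \<gamma> assume "\<gamma> \<in> (\<Union>i. \<Gamma> i)"
    then obtain i where "\<gamma> \<in> \<Gamma> i" by auto
    then have "1 \<le> line_integral (\<rho> i) \<gamma>" using \<rho>(2) by auto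
    also have "\<dots> \<le> line_integral R \<gamma>" by (rule line_integral_mono) (auto simp: R_def intro: SUP_upper)
    finally show "1 \<le> line_integral R \<gamma>" .
  qed
  moreover have "(\<integral>\<^sup>+ x. enn_powr (R x) p \<partial>\<mu>) \<le> ennreal e"
  proof -
    have m: "(\<lambda>x. enn_powr (\<rho> i x) p) \<in> borel_measurable \<mu>" for i
      using \<rho>(1) by (subst measurable_cong_sets[OF mm refl]) measurable
    have "(\<integral>\<^sup>+ x. enn_powr (R x) p \<partial>\<mu>) \<le> (\<integral>\<^sup>+ x. (\<Sum>i. enn_powr (\<rho> i x) p) \<partial>\<mu>)"
      unfolding R_def by (rule nn_integral_mono) (rule enn_powr_SUP_le_suminf[OF p])
    also have "\<dots> = (\<Sum>i. \<integral>\<^sup>+ x. enn_powr (\<rho> i x) p \<partial>\<mu>)"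
      using m by (rule nn_integral_suminf)
    also have "\<dots> \<le> (\<Sum>i. ennreal (e * (1/2)^Suc i))"
      by (intro suminf_le summableI less_imp_le \<rho>(3))
    also have "\<dots> = ennreal (\<Sum>i. e * (1/2)^Suc i)"
      using e by (intro suminf_ennreal2) (auto intro!: summable_mult sums_summable[OF power_half_series])
    also have "(\<Sum>i. e * (1/2)^Suc i) = e"
      using sums_mult[OF power_half_series, of e] by (simp add: sums_iff)
    finally show ?thesis .
  qed
  ultimately show "\<exists>\<rho>. \<rho> \<in> borel_measurable borel \<and> (\<forall>\<gamma>\<in>(\<Union>i. \<Gamma> i). 1 \<le> line_integral \<rho> \<gamma>) \<and>
    (\<integral>\<^sup>+ x. enn_powr (\<rho> x) p \<partial>\<mu>) \<le> ennreal e" using Rm by blast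
qed

lemma modulus_empty: "p > 0 \<Longrightarrow> modulus \<mu> p {} = 0"
  by (rule modulus_zeroI) (auto intro!: exI[of _ "\<lambda>_. 0"])

lemma modulus_Union_countable:
  assumes mm: "sets \<mu> = sets borel" and p: "p > 0" and I: "countable I"
    and Z: "\<And>i. i \<in> I \<Longrightarrow> modulus \<mu> p (\<Gamma> i) = 0"
  shows "modulus \<mu> p (\<Union>i\<in>I. \<Gamma> i) = 0"
proof (cases "I = {}")
  case True then show ?thesis using modulus_empty p by simp
next
  case False
  have "(\<Union>i\<in>I. \<Gamma> i) = (\<Union>n. \<Gamma> (from_nat_into I n))"
    proof -
    have "\<Gamma> ` I = \<Gamma> ` range (from_nat_into I)" using range_from_nat_into[OF False I] by simp
    then show ?thesis by (simp add: image_image)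
  qed
  also have "modulus \<mu> p \<dots> = 0"
    by (rule modulus_Union_nat[OF mm p]) (simp add: Z False from_nat_into)
  finally show ?thesis .
qed

definition clamp :: "real \<Rightarrow> real" where "clamp t = max 0 (min 1 t)"

lemma clamp_id[simp]: "t \<in> {0..1} \<Longrightarrow> clamp t = t"
  by (auto simp: clamp_def)

lemma clamp_range: "clamp t \<in> {0..1}"
  by (auto simp: clamp_def)

lemma lip_curve_cont: "lip_curve \<gamma> \<Longrightarrow> continuous_on {0..1} \<gamma>"
  unfolding lip_curve_def using lipschitz_on_continuous_on by blast

lemma clamp_cont: "continuous_on UNIV clamp"
  unfolding clamp_def by (intro continuous_intros)

lemma clamp_comp_cont: "lip_curve \<gamma> \<Longrightarrow> continuous_on UNIV (\<gamma> \<circ> clamp)"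
  by (rule continuous_on_compose[OF clamp_cont])
     (auto intro: continuous_on_subset[OF lip_curve_cont] clamp_range)

definition mdF :: "(real \<Rightarrow> 'a::metric_space) \<Rightarrow> real \<Rightarrow> real \<Rightarrow> ennreal" where
  "mdF c e t = (SUP y\<in>({0..1} \<inter> ball t e - {t}). ennreal (dist (c y) (c t) / \<bar>y - t\<bar>))"

lemma metric_deriv_INF: "metric_deriv c t = (INF e\<in>{0<..}. mdF c e t)"
  unfolding metric_deriv_def mdF_def by (rule Limsup_within)

lemma mdF_mono: "e \<le> e' \<Longrightarrow> mdF c e t \<le> mdF c e' t"
  unfolding mdF_def by (rule SUP_subset_mono) auto

lemma metric_deriv_INF_nat: "metric_deriv c t = (INF n. mdF c (1/Suc n) t)"
proof (rule antisym)
  show "metric_deriv c t \<le> (INF n. mdF c (1/Suc n) t)"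
    unfolding metric_deriv_INF by (intro INF_greatest INF_lower) auto
  show "(INF n. mdF c (1/Suc n) t) \<le> metric_deriv c t"
    unfolding metric_deriv_INF
  proof (intro INF_greatest)
    fix e :: real assume "e \<in> {0<..}"
    then obtain n where n: "n > 0" "inverse (real n) < e" using ex_inverse_of_nat_less by auto
    have "1 / real (Suc n) \<le> e" using n
      by (smt (verit, ccfv_SIG) frac_le inverse_eq_divide less_eq_real_def of_nat_0_less_iff of_nat_Suc)
    then have "(INF n. mdF c (1/Suc n) t) \<le> mdF c (1/Suc n) t" by (intro INF_lower) auto
    also have "\<dots> \<le> mdF c e t" using \<open>1 / real (Suc n) \<le> e\<close> by (rule mdF_mono)
    finally show "(INF n. mdF c (1/Suc n) t) \<le> mdF c e t" .
  qed
qed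

lemma mdF_open:
  assumes c: "continuous_on UNIV c"
  shows "open {t. a < mdF c e t}"
proof -
  have eq: "{t. a < mdF c e t} = (\<Union>y\<in>{0..1}. (\<lambda>t. ennreal (dist (c y) (c t) / \<bar>y - t\<bar>)) -` {a<..} \<inter> (ball y e - {y}))"
    unfolding mdF_def less_SUP_iff by (auto simp: dist_commute)
  have "open ((\<lambda>t. ennreal (dist (c y) (c t) / \<bar>y - t\<bar>)) -` {a<..} \<inter> (ball y e - {y}))" for y
  proof -
    have C: "continuous_on (ball y e - {y}) (\<lambda>t. ennreal (dist (c y) (c t) / \<bar>y - t\<bar>))"
      by (intro continuous_on_ennreal continuous_intros continuous_on_subset[OF c]) auto
    have O: "open (ball y e - {y})" by (intro open_Diff) auto
    show ?thesis
      using continuous_on_open_vimage[OF O, THEN iffD1, OF C, rule_format, OF open_greaterThan] .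
  qed
  then show ?thesis unfolding eq by (intro open_UN) blast
qed

lemma mdF_meas: "continuous_on UNIV c \<Longrightarrow> (\<lambda>t. mdF c e t) \<in> borel_measurable borel"
  by (rule borel_measurableI_greater) (simp add: mdF_open borel_open)

lemma md_meas: "continuous_on UNIV c \<Longrightarrow> metric_deriv c \<in> borel_measurable borel"
  unfolding metric_deriv_INF_nat[abs_def] using mdF_meas[of c] by measurable

lemma md_clamp: "t \<in> {0..1} \<Longrightarrow> metric_deriv (\<gamma> \<circ> clamp) t = metric_deriv \<gamma> t"
  unfolding metric_deriv_INF mdF_def by (intro INF_cong SUP_cong refl) auto

lemma integrand_meas:
  assumes "lip_curve \<gamma>" "\<rho> \<in> borel_measurable borel" "S \<in> sets borel" "S \<subseteq> {0..1}"
  shows "(\<lambda>t. \<rho> (\<gamma> t) * metric_deriv \<gamma> t * indicator S t) \<in> borel_measurable borel"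
proof -
  have c: "continuous_on UNIV (\<gamma> \<circ> clamp)" using clamp_comp_cont[OF assms(1)] .
  have eq: "(\<lambda>t. \<rho> (\<gamma> t) * metric_deriv \<gamma> t * indicator S t) =
    (\<lambda>t. \<rho> ((\<gamma> \<circ> clamp) t) * metric_deriv (\<gamma> \<circ> clamp) t * indicator S t)"
  proof
    fix t show "\<rho> (\<gamma> t) * metric_deriv \<gamma> t * indicator S t =
      \<rho> ((\<gamma> \<circ> clamp) t) * metric_deriv (\<gamma> \<circ> clamp) t * indicator S t"
      using assms(4) md_clamp[of t \<gamma>] by (cases "t \<in> S") auto
  qed
  have [measurable]: "(\<gamma> \<circ> clamp) \<in> borel_measurable borel" using c by (rule borel_measurable_continuous_onI)
  have [measurable]: "metric_deriv (\<gamma> \<circ> clamp) \<in> borel_measurable borel" using c by (rule md_meas)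
  note [measurable] = assms(2,3)
  show ?thesis unfolding eq by measurable
qed

lemma filtermap_affine_at:
  fixes a c :: real assumes "c \<noteq> 0"
  shows "filtermap (\<lambda>s. a + c * s) (at s) = at (a + c * s)"
proof -
  have bij: "bij (\<lambda>s. a + c * s)"
    using assms by (intro bij_betwI[where g="\<lambda>t. (t - a) / c"]) (auto simp: field_simps)
  have "filtermap (\<lambda>s. a + c * s) (at s within UNIV) = at (a + c * s) within (\<lambda>s. a + c * s) ` UNIV"
  proof (rule filtermap_linear_at_within[OF bij])
    show "isCont (\<lambda>s. a + c * s) s" by (intro continuous_intros)
    fix S :: "real set" assume "open S"
    then show "open ((\<lambda>s. a + c * s) ` S)" using open_affinity[of S c a] assms by simp
  qed
  moreover have "(\<lambda>s. a + c * s) ` UNIV = UNIV" using bij by (simp add: bij_def surj_def)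
  ultimately show ?thesis by simp
qed

lemma md_reparam:
  fixes \<gamma> :: "real \<Rightarrow> 'a::metric_space"
  assumes ab: "0 \<le> a" "a < b" "b \<le> 1" and s: "s \<in> {0<..<1}"
  shows "metric_deriv (\<lambda>s. \<gamma> (a + (b - a) * s)) s = ennreal (b - a) * metric_deriv \<gamma> (a + (b - a) * s)"
proof -
  define \<phi> where "\<phi> = (\<lambda>s. a + (b - a) * s)"
  define t where "t = \<phi> s"
  define h where "h z = ennreal (dist (\<gamma> z) (\<gamma> t) / \<bar>z - t\<bar>)" for z
  have t01: "t \<in> {0<..<1}"
  proof -
    have "(b - a) * s < (b - a) * 1" using ab s by (intro mult_strict_left_mono) auto
    then have "(b - a) * s < b - a" by simp
    moreover have "0 < (b - a) * s" using ab s by (intro mult_pos_pos) auto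
    ultimately have "0 < a + (b - a) * s" "a + (b - a) * s < 1" using ab by linarith+
    then show ?thesis unfolding t_def \<phi>_def by auto
  qed
  have fun_eq: "(\<lambda>y. ennreal (dist (\<gamma> (\<phi> y)) (\<gamma> (\<phi> s)) / \<bar>y - s\<bar>)) = (\<lambda>y. ennreal (b - a) * h (\<phi> y))"
  proof
    fix y
    have "\<bar>\<phi> y - t\<bar> = (b - a) * \<bar>y - s\<bar>" using ab unfolding t_def \<phi>_def
      by (simp add: abs_mult flip: right_diff_distrib)
    then have "dist (\<gamma> (\<phi> y)) (\<gamma> (\<phi> s)) / \<bar>y - s\<bar> = (b - a) * (dist (\<gamma> (\<phi> y)) (\<gamma> t) / \<bar>\<phi> y - t\<bar>)"
      using ab by (simp add: t_def)
    then show "ennreal (dist (\<gamma> (\<phi> y)) (\<gamma> (\<phi> s)) / \<bar>y - s\<bar>) = ennreal (b - a) * h (\<phi> y)"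
      unfolding h_def using ab by (simp only:) (rule ennreal_mult; auto)
  qed
  have ats: "at s within {0..1} = at s" using s by (intro at_within_interior) simp
  have "metric_deriv (\<lambda>s. \<gamma> (\<phi> s)) s = Limsup (at s within {0..1}) (\<lambda>y. ennreal (dist (\<gamma> (\<phi> y)) (\<gamma> (\<phi> s)) / \<bar>y - s\<bar>))"
    unfolding metric_deriv_def ..
  also have "\<dots> = Limsup (at s) (\<lambda>y. ennreal (b - a) * h (\<phi> y))"
    unfolding ats fun_eq ..
  also have "\<dots> = ennreal (b - a) * Limsup (at s) (\<lambda>y. h (\<phi> y))"
    by (rule Limsup_compose_continuous_mono)
       (auto intro!: ennreal_continuous_on_cmult continuous_on_id monoI mult_left_mono)
  also have "Limsup (at s) (\<lambda>y. h (\<phi> y)) = Limsup (filtermap \<phi> (at s)) h"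
    by (rule Limsup_filtermap_eq[symmetric]) (use ab in \<open>auto simp: inj_def \<phi>_def\<close>)
  also have "filtermap \<phi> (at s) = at t"
    unfolding \<phi>_def t_def using ab by (intro filtermap_affine_at) auto
  also have "Limsup (at t) h = metric_deriv \<gamma> t"
    unfolding metric_deriv_def h_def using t01 by (subst at_within_interior) auto
  finally show ?thesis by (simp add: \<phi>_def t_def)
qed

lemma reparam_lip:
  assumes lip: "lip_curve \<gamma>" and ab: "0 \<le> a" "a \<le> b" "b \<le> 1"
  shows "lip_curve (\<lambda>s. \<gamma> (a + (b - a) * s))"
proof -
  obtain L where L: "L-lipschitz_on {0..1} \<gamma>" using lip unfolding lip_curve_def by auto
  have "(L * (b - a))-lipschitz_on {0..1} (\<lambda>s. \<gamma> (a + (b - a) * s))"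
  proof (rule lipschitz_onI)
    fix x y :: real assume xy: "x \<in> {0..1}" "y \<in> {0..1}"
    have in01: "a + (b - a) * z \<in> {0..1}" if "z \<in> {0..1}" for z
    proof -
      have "(b - a) * z \<le> (b - a) * 1" using that ab by (intro mult_left_mono) auto
      then show ?thesis using that ab by auto
    qed
    have "dist (\<gamma> (a + (b - a) * x)) (\<gamma> (a + (b - a) * y)) \<le> L * dist (a + (b - a) * x) (a + (b - a) * y)"
      using lipschitz_onD[OF L in01[OF xy(1)] in01[OF xy(2)]] .
    also have "dist (a + (b - a) * x) (a + (b - a) * y) = (b - a) * dist x y"
      using ab by (simp add: dist_real_def abs_mult flip: right_diff_distrib)
    finally show "dist (\<gamma> (a + (b - a) * x)) (\<gamma> (a + (b - a) * y)) \<le> L * (b - a) * dist x y"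
      by (simp add: mult.assoc)
  next
    show "0 \<le> L * (b - a)" using L ab by (simp add: lipschitz_on_nonneg)
  qed
  then show ?thesis unfolding lip_curve_def by blast
qed

lemma reparam_image:
  fixes a b :: real
  assumes "a \<le> b"
  shows "(\<lambda>s. \<gamma> (a + (b - a) * s)) ` {0..1} = \<gamma> ` {a..b}"
proof -
  have "(\<lambda>s. a + (b - a) * s) ` {0..1} = {a..b}"
  proof (intro equalityI subsetI)
    fix t assume "t \<in> (\<lambda>s. a + (b - a) * s) ` {0..1}"
    then obtain s where s: "s \<in> {0..1}" "t = a + (b - a) * s" by auto
    have "(b - a) * s \<le> b - a" using mult_left_mono[of s 1 "b-a"] s assms by simp
    moreover have "0 \<le> (b - a) * s" using s assms by auto
    ultimately show "t \<in> {a..b}" using s by auto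
  next
    fix t assume t: "t \<in> {a..b}"
    show "t \<in> (\<lambda>s. a + (b - a) * s) ` {0..1}"
    proof (cases "a = b")
      case True then show ?thesis using t by (intro image_eqI[of _ _ 0]) auto
    next
      case False
      then have "a < b" using assms by auto
      then show ?thesis using t
        by (intro image_eqI[of _ _ "(t - a) / (b - a)"]) (auto simp: field_simps)
    qed
  qed
  moreover have "(\<lambda>s. \<gamma> (a + (b - a) * s)) ` {0..1} = \<gamma> ` ((\<lambda>s. a + (b - a) * s) ` {0..1})"
    by (simp add: image_image)
  ultimately show ?thesis by simp
qed

lemma reparam_line_integral:
  assumes lip: "lip_curve \<gamma>" and ab: "0 \<le> a" "a < b" "b \<le> 1" and \<rho>: "\<rho> \<in> borel_measurable borel"
  shows "line_integral \<rho> (\<lambda>s. \<gamma> (a + (b - a) * s)) =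
    (\<integral>\<^sup>+ t. \<rho> (\<gamma> t) * metric_deriv \<gamma> t * indicator {a..b} t \<partial>lborel)"
proof -
  define G where "G t = \<rho> (\<gamma> t) * metric_deriv \<gamma> t * indicator {a..b} t" for t
  have Gm: "G \<in> borel_measurable borel" unfolding G_def
    using ab by (intro integrand_meas[OF lip \<rho>]) auto
  have ind: "(a + (b - a) * s \<in> {a..b}) \<longleftrightarrow> s \<in> {0..1}" for s
  proof -
    have "a \<le> a + (b - a) * s \<longleftrightarrow> 0 \<le> s" using ab by (simp add: zero_le_mult_iff)
    moreover have "a + (b - a) * s \<le> b \<longleftrightarrow> s \<le> 1"
    proof -
      have e: "(b - a) * s \<le> b - a \<longleftrightarrow> s \<le> 1" using mult_le_cancel_left_pos[of "b-a" s 1] ab by simp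
      have "a + (b - a) * s \<le> b \<longleftrightarrow> (b - a) * s \<le> b - a" by (intro iffI) linarith+
      then show ?thesis using e by simp
    qed
    ultimately show ?thesis by auto
  qed
  have "line_integral \<rho> (\<lambda>s. \<gamma> (a + (b - a) * s)) = (\<integral>\<^sup>+ s. ennreal (b - a) * G (a + (b - a) * s) \<partial>lborel)"
    unfolding line_integral_def
  proof (rule nn_integral_cong_AE)
    have "AE s in lborel. s \<noteq> 0 \<and> s \<noteq> 1" using AE_lborel_singleton[of 0] AE_lborel_singleton[of 1] by eventually_elim auto
    then show "AE s in lborel. \<rho> (\<gamma> (a + (b - a) * s)) * metric_deriv (\<lambda>s. \<gamma> (a + (b - a) * s)) s * indicator {0..1} s
        = ennreal (b - a) * G (a + (b - a) * s)"
    proof eventually_elim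
      case (elim s)
      show ?case
      proof (cases "s \<in> {0..1}")
        case True
        then have s01: "s \<in> {0<..<1}" using elim by auto
        show ?thesis using True md_reparam[OF ab s01, of \<gamma>] ind[of s]
          by (simp add: G_def mult.assoc mult.left_commute)
      next
        case False then show ?thesis using ind[of s] by (simp add: G_def)
      qed
    qed
  qed
  also have "\<dots> = ennreal (b - a) * (\<integral>\<^sup>+ s. G (a + (b - a) * s) \<partial>lborel)"
    by (intro nn_integral_cmult measurable_compose[OF _ Gm]) (simp add: measurable_lborel2)
  also have "\<dots> = (\<integral>\<^sup>+ t. G t \<partial>lborel)"
    using nn_integral_real_affine[OF Gm, of "b - a" a] ab by simp
  finally show ?thesis unfolding G_def .
qed

lemma SUP_min_nat: "(SUP n. min (x::ennreal) (of_nat n)) = x"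
proof (rule antisym)
  show "(SUP n. min x (of_nat n)) \<le> x" by (rule SUP_least) simp
  show "x \<le> (SUP n. min x (of_nat n))"
  proof (cases "x = \<infinity>")
    case True
    then have "(SUP n. min x (of_nat n)) = (SUP n. of_nat n :: ennreal)" by simp
    also have "\<dots> = \<infinity>" using ennreal_SUP_of_nat_eq_top by simp
    finally have "(SUP n. min x (of_nat n)) = \<infinity>" .
    then show ?thesis using True by (metis order_refl)
  next
    case False
    then obtain r where r: "r \<ge> 0" "x = ennreal r" by (cases x) auto
    obtain n :: nat where "r \<le> real n" using real_arch_simple by blast
    then have "min x (of_nat n) = x" using r by (simp add: min_def ennreal_of_nat_eq_real_of_nat)
    then show ?thesis by (metis SUP_upper UNIV_I)
  qed
qed

lemma nn_integral_abs_cont: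
  fixes G :: "real \<Rightarrow> ennreal"
  assumes Gm: "G \<in> borel_measurable borel" and fin: "(\<integral>\<^sup>+ t. G t \<partial>lborel) < \<infinity>" and e: "e > 0"
  shows "\<exists>d>0. \<forall>A\<in>sets borel. emeasure lborel A < ennreal d \<longrightarrow> (\<integral>\<^sup>+ t. G t * indicator A t \<partial>lborel) < ennreal e"
proof -
  define Gn where "Gn n t = min (G t) (of_nat n)" for n t
  have Gnm[measurable]: "Gn n \<in> borel_measurable borel" for n unfolding Gn_def using Gm by measurable
  have inc: "incseq Gn" unfolding Gn_def incseq_def le_fun_def
    by (intro allI impI min.mono order_refl) simp
  have "(\<integral>\<^sup>+ t. G t \<partial>lborel) = (\<integral>\<^sup>+ t. (SUP n. Gn n t) \<partial>lborel)"
    unfolding Gn_def SUP_min_nat ..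
  also have "\<dots> = (SUP n. \<integral>\<^sup>+ t. Gn n t \<partial>lborel)"
    using inc by (intro nn_integral_monotone_convergence_SUP) (auto simp: measurable_lborel2)
  finally have lim: "(\<integral>\<^sup>+ t. G t \<partial>lborel) = (SUP n. \<integral>\<^sup>+ t. Gn n t \<partial>lborel)" .
  define I where "I = (\<integral>\<^sup>+ t. G t \<partial>lborel)"
  obtain N where N: "I < (\<integral>\<^sup>+ t. Gn N t \<partial>lborel) + ennreal (e/2)"
  proof (rule ccontr)
    assume "\<not> thesis"
    then have le: "(\<integral>\<^sup>+ t. Gn n t \<partial>lborel) + ennreal (e/2) \<le> I" for n using that by (meson not_le)
    have "I + ennreal (e/2) = (SUP n. (\<integral>\<^sup>+ t. Gn n t \<partial>lborel) + ennreal (e/2))"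
      unfolding I_def lim by (rule ennreal_SUP_add_left[symmetric]) simp
    also have "\<dots> \<le> I" by (rule SUP_least) (rule le)
    finally have "I + ennreal (e/2) \<le> I" .
    moreover obtain i where i: "i \<ge> 0" "I = ennreal i" using fin unfolding I_def by (cases "\<integral>\<^sup>+ t. G t \<partial>lborel") auto
    ultimately have "ennreal (i + e/2) \<le> ennreal i" using e by (simp add: ennreal_plus)
    then have "i + e/2 \<le> i" using i e by (subst (asm) ennreal_le_iff) auto
    then show False using e by simp
  qed
  have GnG: "Gn N t \<le> G t" for t unfolding Gn_def by simp
  have finN: "(\<integral>\<^sup>+ t. Gn N t \<partial>lborel) \<noteq> \<infinity>"
  proof -
    have "(\<integral>\<^sup>+ t. Gn N t \<partial>lborel) \<le> (\<integral>\<^sup>+ t. G t \<partial>lborel)" using GnG by (intro nn_integral_mono) auto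
    then show ?thesis using fin by (simp add: top.not_eq_extremum order_le_less_trans)
  qed
  have diff: "(\<integral>\<^sup>+ t. G t - Gn N t \<partial>lborel) < ennreal (e/2)"
  proof -
    have "(\<integral>\<^sup>+ t. G t - Gn N t \<partial>lborel) = I - (\<integral>\<^sup>+ t. Gn N t \<partial>lborel)"
      unfolding I_def using Gm finN GnG by (intro nn_integral_diff) (auto simp: measurable_lborel2)
    also have "\<dots> < ennreal (e/2)"
    proof -
      obtain i where i: "i \<ge> 0" "I = ennreal i" using fin unfolding I_def by (cases "\<integral>\<^sup>+ t. G t \<partial>lborel") auto
      obtain j where j: "j \<ge> 0" "(\<integral>\<^sup>+ t. Gn N t \<partial>lborel) = ennreal j" using finN by (cases "\<integral>\<^sup>+ t. Gn N t \<partial>lborel") auto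
      have "ennreal i < ennreal (j + e/2)" using N i j e by (simp add: ennreal_plus)
      then have "i < j + e/2" using ennreal_less_iff i j e by (metis ennreal_le_iff linorder_not_le)
      then show ?thesis using i j e by (simp add: ennreal_minus ennreal_lessI)
    qed
    finally show ?thesis .
  qed
  define d where "d = e / (2 * (real N + 1))"
  have d: "d > 0" using e by (simp add: d_def)
  show ?thesis
  proof (intro exI[of _ d] conjI d ballI impI)
    fix A :: "real set" assume A: "A \<in> sets borel" "emeasure lborel A < ennreal d"
    have "(\<integral>\<^sup>+ t. G t * indicator A t \<partial>lborel) \<le> (\<integral>\<^sup>+ t. (G t - Gn N t) + of_nat N * indicator A t \<partial>lborel)"
    proof (rule nn_integral_mono)
      fix t
      have "G t = (G t - Gn N t) + Gn N t" using GnG[of t] by (simp add: diff_add_cancel_ennreal)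
      moreover have "Gn N t \<le> of_nat N" unfolding Gn_def by simp
      ultimately have "G t \<le> (G t - Gn N t) + of_nat N" by (metis add_left_mono)
      then show "G t * indicator A t \<le> (G t - Gn N t) + of_nat N * indicator A t"
        by (cases "t \<in> A") auto
    qed
    also have "\<dots> = (\<integral>\<^sup>+ t. G t - Gn N t \<partial>lborel) + of_nat N * emeasure lborel A"
      using A Gm by (subst nn_integral_add) (auto simp: nn_integral_cmult_indicator measurable_lborel2)
    also have "\<dots> < ennreal (e/2 + e/2)"
    proof (rule add_mono_ennreal[OF diff])
      have "of_nat N * emeasure lborel A \<le> of_nat N * ennreal d" using A by (intro mult_left_mono) auto
      also have "\<dots> = ennreal (real N * d)" by (simp add: ennreal_mult ennreal_of_nat_eq_real_of_nat d[THEN less_imp_le])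
      also have "\<dots> < ennreal (e / 2)"
      proof (rule ennreal_lessI)
        show "0 < e / 2" using e by simp
        have "real N * d = (e / 2) * (real N / (real N + 1))" unfolding d_def by (simp add: field_simps)
        also have "\<dots> < (e / 2) * 1" using e by (intro mult_strict_left_mono) auto
        finally show "real N * d < e / 2" by simp
      qed
      finally show "of_nat N * emeasure lborel A < ennreal (e/2)" .
    qed
    also have "e/2 + e/2 = e" by simp
    finally show "(\<integral>\<^sup>+ t. G t * indicator A t \<partial>lborel) < ennreal e" .
  qed
qed

lemma ug_bound:
  fixes f :: "'a::metric_space \<Rightarrow> 'c::metric_space"
  assumes ug: "upper_gradient U f \<rho>" and \<rho>m: "\<rho> \<in> borel_measurable borel" and lip: "lip_curve \<gamma>"
    and ab: "0 \<le> a" "a \<le> b" "b \<le> 1" and sub: "\<gamma> ` {a..b} \<subseteq> U"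
  shows "ennreal (dist (f (\<gamma> b)) (f (\<gamma> a))) \<le>
    (\<integral>\<^sup>+ t. \<rho> (\<gamma> t) * indicator U (\<gamma> t) * metric_deriv \<gamma> t * indicator {a<..<b} t \<partial>lborel)"
proof (cases "a = b")
  case True then show ?thesis by simp
next
  case False
  then have ab': "a < b" using ab by simp
  define \<beta> where "\<beta> = (\<lambda>s. \<gamma> (a + (b - a) * s))"
  have "lip_curve \<beta>" unfolding \<beta>_def using reparam_lip[OF lip ab] .
  moreover have "\<beta> ` {0..1} \<subseteq> U" unfolding \<beta>_def using reparam_image[OF ab(2), of \<gamma>] sub by simp
  ultimately have "ennreal (dist (f (\<beta> 1)) (f (\<beta> 0))) \<le> line_integral \<rho> \<beta>"
    using ug unfolding upper_gradient_def by blast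
  also have "line_integral \<rho> \<beta> = (\<integral>\<^sup>+ t. \<rho> (\<gamma> t) * metric_deriv \<gamma> t * indicator {a..b} t \<partial>lborel)"
    unfolding \<beta>_def by (rule reparam_line_integral[OF lip ab(1) ab' ab(3) \<rho>m])
  also have "\<dots> = (\<integral>\<^sup>+ t. \<rho> (\<gamma> t) * indicator U (\<gamma> t) * metric_deriv \<gamma> t * indicator {a<..<b} t \<partial>lborel)"
  proof (rule nn_integral_cong_AE)
    have "AE t in lborel. t \<noteq> a \<and> t \<noteq> b" using AE_lborel_singleton[of a] AE_lborel_singleton[of b] by eventually_elim auto
    then show "AE t in lborel. \<rho> (\<gamma> t) * metric_deriv \<gamma> t * indicator {a..b} t =
        \<rho> (\<gamma> t) * indicator U (\<gamma> t) * metric_deriv \<gamma> t * indicator {a<..<b} t"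
    proof eventually_elim
      case (elim t)
      show ?case
      proof (cases "t \<in> {a..b}")
        case True
        then have "\<gamma> t \<in> U" using sub by auto
        then show ?thesis using True elim by (simp add: indicator_def)
      next
        case False then show ?thesis by (auto simp: indicator_def)
      qed
    qed
  qed
  finally show ?thesis unfolding \<beta>_def by simp
qed

lemma ac_main:
  fixes f :: "'a::metric_space \<Rightarrow> 'c::metric_space"
  assumes lip: "lip_curve \<gamma>"
    and F: "finite F" and cover: "\<gamma> ` {0..1} \<subseteq> (\<Union>c\<in>F. ball c (r c))"
    and ug: "\<And>c. c \<in> F \<Longrightarrow> upper_gradient (ball c (r c)) f (\<rho> c)"
    and \<rho>m: "\<And>c. c \<in> F \<Longrightarrow> \<rho> c \<in> borel_measurable borel"
    and fin: "\<And>c. c \<in> F \<Longrightarrow> line_integral (\<lambda>x. \<rho> c x * indicator (ball c (r c)) x) \<gamma> < \<infinity>"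
  shows "abs_continuous_on {0..1} (f \<circ> \<gamma>)"
proof -
  define K where "K = \<gamma> ` {0..1}"
  have K: "compact K" unfolding K_def using lip_curve_cont[OF lip] by (intro compact_continuous_image) auto
  obtain \<epsilon>0 where \<epsilon>0: "\<epsilon>0 > 0" "\<And>x. x \<in> K \<Longrightarrow> \<exists>G\<in>(\<lambda>c. ball c (r c)) ` F. ball x \<epsilon>0 \<subseteq> G"
    using Heine_Borel_lemma[OF K, of "(\<lambda>c. ball c (r c)) ` F"] cover unfolding K_def by auto
  obtain L where L: "L-lipschitz_on {0..1} \<gamma>" using lip unfolding lip_curve_def by auto
  have L0: "L \<ge> 0" using L by (rule lipschitz_on_nonneg)
  define \<eta> where "\<eta> = \<epsilon>0 / (L + 1)"
  have \<eta>: "\<eta> > 0" using \<epsilon>0 L0 by (simp add: \<eta>_def)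
  have small: "\<exists>c\<in>F. \<gamma> ` {a..b} \<subseteq> ball c (r c)" if ab: "0 \<le> a" "a \<le> b" "b \<le> 1" "b - a < \<eta>" for a b
  proof -
    have "\<gamma> a \<in> K" using ab unfolding K_def by auto
    then obtain c where c: "c \<in> F" "ball (\<gamma> a) \<epsilon>0 \<subseteq> ball c (r c)" using \<epsilon>0(2) by blast
    have "\<gamma> t \<in> ball (\<gamma> a) \<epsilon>0" if t: "t \<in> {a..b}" for t
    proof -
      have "dist (\<gamma> a) (\<gamma> t) \<le> L * dist a t" using t ab by (intro lipschitz_onD[OF L]) auto
      also have "\<dots> \<le> L * \<eta>" using t ab L0 by (intro mult_left_mono) (auto simp: dist_real_def)
      also have "L * \<eta> < \<epsilon>0"
      proof -
        have "L * \<eta> = \<epsilon>0 * (L / (L + 1))" unfolding \<eta>_def using L0 by (simp add: field_simps)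
        also have "\<dots> < \<epsilon>0 * 1" using \<epsilon>0 L0 by (intro mult_strict_left_mono) auto
        finally show ?thesis by simp
      qed
      finally show ?thesis by simp
    qed
    then show ?thesis using c by blast
  qed
  define g where "g c x = \<rho> c x * indicator (ball c (r c)) x" for c x
  have gm: "g c \<in> borel_measurable borel" if "c \<in> F" for c
  proof -
    have [measurable]: "ball c (r c) \<in> sets borel" by auto
    show ?thesis unfolding g_def using \<rho>m[OF that] by measurable
  qed
  define H where "H t = (\<Sum>c\<in>F. g c (\<gamma> t) * metric_deriv \<gamma> t * indicator {0..1} t)" for t
  have Hc: "(\<lambda>t. g c (\<gamma> t) * metric_deriv \<gamma> t * indicator {0..1} t) \<in> borel_measurable borel" if "c \<in> F" for c
    using integrand_meas[OF lip gm[OF that], of "{0..1}"] by simp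
  have Hm: "H \<in> borel_measurable borel" unfolding H_def using Hc by (intro borel_measurable_sum) auto
  have "(\<integral>\<^sup>+ t. H t \<partial>lborel) = (\<Sum>c\<in>F. \<integral>\<^sup>+ t. g c (\<gamma> t) * metric_deriv \<gamma> t * indicator {0..1} t \<partial>lborel)"
    unfolding H_def using Hc by (intro nn_integral_sum) (auto simp: measurable_lborel2)
  also have "\<dots> < \<infinity>"
    using F fin unfolding line_integral_def g_def by simp
  finally have Hfin: "(\<integral>\<^sup>+ t. H t \<partial>lborel) < \<infinity>" .
  show ?thesis unfolding abs_continuous_on_def
  proof (intro allI impI)
    fix \<epsilon> :: real assume \<epsilon>: "\<epsilon> > 0"
    obtain d where d: "d > 0" "\<And>A. A \<in> sets borel \<Longrightarrow> emeasure lborel A < ennreal d \<Longrightarrow>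
        (\<integral>\<^sup>+ t. H t * indicator A t \<partial>lborel) < ennreal \<epsilon>"
      using nn_integral_abs_cont[OF Hm Hfin \<epsilon>] by blast
    show "\<exists>\<delta>>0. \<forall>(n::nat) (a::nat\<Rightarrow>real) b. (\<forall>i<n. a i \<le> b i \<and> {a i..b i} \<subseteq> {0..1}) \<and>
        disjoint_family_on (\<lambda>i. {a i<..<b i}) {..<n} \<and> (\<Sum>i<n. b i - a i) < \<delta> \<longrightarrow>
        (\<Sum>i<n. dist ((f \<circ> \<gamma>) (b i)) ((f \<circ> \<gamma>) (a i))) < \<epsilon>"
    proof (intro exI[of _ "min d \<eta>"] conjI allI impI)
      show "0 < min d \<eta>" using d \<eta> by simp
      fix n :: nat and a b :: "nat \<Rightarrow> real"
      assume H: "(\<forall>i<n. a i \<le> b i \<and> {a i..b i} \<subseteq> {0..1}) \<and>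
        disjoint_family_on (\<lambda>i. {a i<..<b i}) {..<n} \<and> (\<Sum>i<n. b i - a i) < min d \<eta>"
      then have ab: "\<And>i. i < n \<Longrightarrow> 0 \<le> a i \<and> a i \<le> b i \<and> b i \<le> 1"
        and disj: "disjoint_family_on (\<lambda>i. {a i<..<b i}) {..<n}"
        and sum: "(\<Sum>i<n. b i - a i) < min d \<eta>" by auto
      have each: "ennreal (dist (f (\<gamma> (b i))) (f (\<gamma> (a i)))) \<le> (\<integral>\<^sup>+ t. H t * indicator {a i<..<b i} t \<partial>lborel)"
        if i: "i < n" for i
      proof -
        have "b i - a i \<le> (\<Sum>i<n. b i - a i)"
          using i ab by (intro member_le_sum[of i "{..<n}" "\<lambda>i. b i - a i"]) auto
        then have "b i - a i < \<eta>" using sum by simp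
        then obtain c where c: "c \<in> F" "\<gamma> ` {a i..b i} \<subseteq> ball c (r c)" using small ab[OF i] by blast
        have "ennreal (dist (f (\<gamma> (b i))) (f (\<gamma> (a i)))) \<le>
          (\<integral>\<^sup>+ t. \<rho> c (\<gamma> t) * indicator (ball c (r c)) (\<gamma> t) * metric_deriv \<gamma> t * indicator {a i<..<b i} t \<partial>lborel)"
          using ug_bound[OF ug[OF c(1)] \<rho>m[OF c(1)] lip _ _ _ c(2)] ab[OF i] by auto
        also have "\<dots> \<le> (\<integral>\<^sup>+ t. H t * indicator {a i<..<b i} t \<partial>lborel)"
        proof (rule nn_integral_mono)
          fix t
          show "\<rho> c (\<gamma> t) * indicator (ball c (r c)) (\<gamma> t) * metric_deriv \<gamma> t * indicator {a i<..<b i} t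
            \<le> H t * indicator {a i<..<b i} t"
          proof (cases "t \<in> {a i<..<b i}")
            case True
            then have t01: "t \<in> {0..1}" using ab[OF i] by auto
            have "g c (\<gamma> t) * metric_deriv \<gamma> t * indicator {0..1} t \<le> H t"
              unfolding H_def using c(1) F by (intro member_le_sum) auto
            then show ?thesis using True t01 by (simp add: g_def)
          qed simp
        qed
        finally show ?thesis .
      qed
      define U where "U = (\<Union>i<n. {a i<..<b i})"
      have Um: "U \<in> sets borel" unfolding U_def by auto
      have ind: "(\<Sum>i<n. indicator {a i<..<b i} t) = (indicator U t :: ennreal)" for t
      proof (cases "t \<in> U")
        case True
        then obtain j where j: "j < n" "t \<in> {a j<..<b j}" unfolding U_def by auto
        have "(\<Sum>i<n. 1 * indicator {a i<..<b i} t) = (1::ennreal)"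
          using sum_indicator_disjoint_family[OF disj j(2), of "\<lambda>_. 1"] j by simp
        then show ?thesis using True by simp
      next
        case False
        then have "\<forall>i<n. t \<notin> {a i<..<b i}" unfolding U_def by auto
        then show ?thesis using False by simp
      qed
      have "(\<Sum>i<n. ennreal (dist (f (\<gamma> (b i))) (f (\<gamma> (a i))))) \<le>
          (\<Sum>i<n. \<integral>\<^sup>+ t. H t * indicator {a i<..<b i} t \<partial>lborel)"
        using each by (intro sum_mono) auto
      also have "\<dots> = (\<integral>\<^sup>+ t. (\<Sum>i<n. H t * indicator {a i<..<b i} t) \<partial>lborel)"
        using Hm by (intro nn_integral_sum[symmetric]) (auto simp: measurable_lborel2)
      also have "\<dots> = (\<integral>\<^sup>+ t. H t * indicator U t \<partial>lborel)"
        by (simp add: ind sum_distrib_left[symmetric])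
      also have "\<dots> < ennreal \<epsilon>"
      proof (rule d(2)[OF Um])
        have "emeasure lborel U \<le> (\<Sum>i<n. emeasure lborel {a i<..<b i})"
          unfolding U_def by (intro emeasure_subadditive_finite) auto
        also have "\<dots> = (\<Sum>i<n. ennreal (b i - a i))"
          using ab by (intro sum.cong refl emeasure_lborel_Ioo) auto
        also have "\<dots> = ennreal (\<Sum>i<n. b i - a i)"
          using ab by (intro sum_ennreal) auto
        also have "\<dots> < ennreal d"
          using sum d by (intro ennreal_lessI) auto
        finally show "emeasure lborel U < ennreal d" .
      qed
      finally have "ennreal (\<Sum>i<n. dist (f (\<gamma> (b i))) (f (\<gamma> (a i)))) < ennreal \<epsilon>"
        by (simp add: sum_ennreal)
      then show "(\<Sum>i<n. dist ((f \<circ> \<gamma>) (b i)) ((f \<circ> \<gamma>) (a i))) < \<epsilon>"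
      proof -
        have "0 \<le> (\<Sum>i<n. dist (f (\<gamma> (b i))) (f (\<gamma> (a i))))" by (intro sum_nonneg) auto
        then show ?thesis using \<open>ennreal (\<Sum>i<n. dist (f (\<gamma> (b i))) (f (\<gamma> (a i)))) < ennreal \<epsilon>\<close>
          by (simp add: ennreal_less_iff)
      qed
    qed
  qed
qed

lemma modulus_bad_zero:
  assumes mm: "sets \<mu> = sets borel" and p: "p > 0" and gm: "g \<in> borel_measurable borel"
    and fin: "(\<integral>\<^sup>+ x. enn_powr (g x) p \<partial>\<mu>) < \<infinity>"
  shows "modulus \<mu> p {\<gamma>. lip_curve \<gamma> \<and> line_integral g \<gamma> = \<infinity>} = 0"
proof (rule modulus_zeroI)
  fix e :: real assume e: "e > 0"
  define M where "M = enn2real (\<integral>\<^sup>+ x. enn_powr (g x) p \<partial>\<mu>)"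
  have M: "(\<integral>\<^sup>+ x. enn_powr (g x) p \<partial>\<mu>) = ennreal M" "M \<ge> 0"
    using fin unfolding M_def by (cases "\<integral>\<^sup>+ x. enn_powr (g x) p \<partial>\<mu>"; simp)+
  define k where "k = (e / (M + 1)) powr (1/p)"
  have k: "k > 0" unfolding k_def using e M by simp
  have kp: "k powr p = e / (M + 1)" unfolding k_def using e M p by (simp add: powr_powr)
  define \<rho> where "\<rho> x = ennreal k * g x" for x
  have \<rho>m: "\<rho> \<in> borel_measurable borel" unfolding \<rho>_def using gm by measurable
  have adm: "\<forall>\<gamma>\<in>{\<gamma>. lip_curve \<gamma> \<and> line_integral g \<gamma> = \<infinity>}. 1 \<le> line_integral \<rho> \<gamma>"
  proof
    fix \<gamma> assume \<gamma>: "\<gamma> \<in> {\<gamma>. lip_curve \<gamma> \<and> line_integral g \<gamma> = \<infinity>}"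
    have "line_integral \<rho> \<gamma> = (\<integral>\<^sup>+ t. ennreal k * (g (\<gamma> t) * metric_deriv \<gamma> t * indicator {0..1} t) \<partial>lborel)"
      unfolding line_integral_def \<rho>_def by (simp add: mult.assoc)
    also have "\<dots> = ennreal k * line_integral g \<gamma>"
      unfolding line_integral_def using integrand_meas[of \<gamma> g "{0..1}"] \<gamma> gm
      by (subst nn_integral_cmult) (auto simp: measurable_lborel2)
    also have "\<dots> = \<infinity>" using \<gamma> k by (simp add: ennreal_mult_top)
    finally show "1 \<le> line_integral \<rho> \<gamma>" by simp
  qed
  have "(\<integral>\<^sup>+ x. enn_powr (\<rho> x) p \<partial>\<mu>) = (\<integral>\<^sup>+ x. ennreal (k powr p) * enn_powr (g x) p \<partial>\<mu>)"
    unfolding \<rho>_def using k p by (simp add: enn_powr_cmult)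
  also have "\<dots> = ennreal (k powr p) * ennreal M"
    using gm M by (subst nn_integral_cmult) (auto simp: measurable_cong_sets[OF mm refl])
  also have "\<dots> = ennreal (e / (M + 1) * M)" using kp M e by (subst ennreal_mult) auto
  also have "\<dots> \<le> ennreal e"
  proof (rule ennreal_leI)
    have "e / (M + 1) * M = e * (M / (M + 1))" by simp
    also have "\<dots> \<le> e * 1" using e M by (intro mult_left_mono) auto
    finally show "e / (M + 1) * M \<le> e" by simp
  qed
  finally show "\<exists>\<rho>. \<rho> \<in> borel_measurable borel \<and> (\<forall>\<gamma>\<in>{\<gamma>. lip_curve \<gamma> \<and> line_integral g \<gamma> = \<infinity>}. 1 \<le> line_integral \<rho> \<gamma>) \<and>
    (\<integral>\<^sup>+ x. enn_powr (\<rho> x) p \<partial>\<mu>) \<le> ennreal e" using \<rho>m adm by blast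
qed

lemma proper_dense:
  assumes pr: "proper_space TYPE('a::metric_space)"
  shows "\<exists>Dn::'a set. countable Dn \<and> (\<forall>x e. e > 0 \<longrightarrow> (\<exists>y\<in>Dn. dist x y < e))"
proof -
  define x0 :: 'a where "x0 = undefined"
  have "\<exists>T. finite T \<and> cball x0 (real n) \<subseteq> (\<Union>y\<in>T. ball y (1 / Suc m))" for n m :: nat
  proof -
    have cmp: "compact (cball x0 (real n))" using pr unfolding proper_space_def by auto
    have cov: "cball x0 (real n) \<subseteq> (\<Union>y\<in>cball x0 (real n). ball y (1 / Suc m))" by auto
    obtain T where "T \<subseteq> cball x0 (real n)" "finite T" "cball x0 (real n) \<subseteq> (\<Union>y\<in>T. ball y (1 / Suc m))"
      using compactE_image[OF cmp _ cov] by auto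
    then show ?thesis by blast
  qed
  then obtain T where T: "\<And>n m. finite (T n m)" "\<And>n m. cball x0 (real n) \<subseteq> (\<Union>y\<in>T n m. ball y (1 / Suc m))"
    by metis
  define Dn where "Dn = (\<Union>n. \<Union>m. T n m)"
  have "countable Dn" unfolding Dn_def by (intro countable_UN) (auto intro: countable_finite[OF T(1)])
  moreover have "\<exists>y\<in>Dn. dist x y < e" if e: "e > 0" for x e
  proof -
    obtain n :: nat where n: "dist x0 x \<le> real n" using real_arch_simple by blast
    obtain m :: nat where m: "inverse (real m) < e" "m > 0" using ex_inverse_of_nat_less e by blast
    have "1 / real (Suc m) < e" using m
      by (smt (verit, ccfv_SIG) frac_le inverse_eq_divide of_nat_0_less_iff of_nat_Suc)
    moreover from n have "x \<in> cball x0 (real n)" by simp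
    then obtain y where "y \<in> T n m" "x \<in> ball y (1 / Suc m)" using T(2)[of n m] by blast
    ultimately have "y \<in> Dn" "dist x y < e" unfolding Dn_def by (auto simp: dist_commute)
    then show ?thesis by blast
  qed
  ultimately show ?thesis by blast
qed

definition box :: "nat \<Rightarrow> nat \<Rightarrow> 'a::metric_space list \<Rightarrow> nat \<Rightarrow> (real \<Rightarrow> 'a) set" where
  "box L N xs m = {\<beta>. (real L)-lipschitz_on {0..1} \<beta> \<and> length xs = Suc N \<and>
     (\<forall>k\<le>N. dist (\<beta> (real k / real N)) (xs ! k) < 1 / Suc m)}"

lemma box_sub:
  assumes \<gamma>: "\<gamma> \<in> box L N xs m" and \<beta>: "\<beta> \<in> box L N xs m" and N: "N > 0" and \<delta>: "\<delta> > 0"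
    and LN: "real L / real N \<le> \<delta> / 8" and m: "1 / real (Suc m) \<le> \<delta> / 8"
  shows "\<beta> \<in> curve_ball \<gamma> \<delta>"
proof -
  have Lg: "(real L)-lipschitz_on {0..1} \<gamma>" and Lb: "(real L)-lipschitz_on {0..1} \<beta>"
    using \<gamma> \<beta> unfolding box_def by auto
  have pts: "dist (\<gamma> (real k / real N)) (xs ! k) < 1 / Suc m" "dist (\<beta> (real k / real N)) (xs ! k) < 1 / Suc m"
    if "k \<le> N" for k using \<gamma> \<beta> that unfolding box_def by auto
  have bound: "dist (\<gamma> t) (\<beta> t) \<le> \<delta> / 2" if t: "t \<in> {0..1}" for t
  proof -
    define k where "k = nat \<lfloor>t * real N\<rfloor>"
    have tN: "0 \<le> t * real N" using t by simp
    have k1: "real k \<le> t * real N" unfolding k_def using tN by linarith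
    have k2: "t * real N < real k + 1" unfolding k_def using tN by linarith
    have kN: "k \<le> N"
    proof -
      have "t * real N \<le> real N" using t by (simp add: mult_left_le_one_le)
      then show ?thesis unfolding k_def by (simp add: nat_le_iff floor_le_iff)
    qed
    have s01: "real k / real N \<in> {0..1}" using kN N by (simp add: field_simps)
    have dts: "dist t (real k / real N) \<le> 1 / real N"
    proof -
      have "t - real k / real N = (t * real N - real k) / real N" using N by (simp add: field_simps)
      moreover have "0 \<le> t * real N - real k" "t * real N - real k \<le> 1" using k1 k2 by linarith+
      ultimately show ?thesis using N by (simp add: dist_real_def divide_right_mono)
    qed
    have A: "dist (\<gamma> t) (\<gamma> (real k / real N)) \<le> real L / real N"
    proof -
      have "dist (\<gamma> t) (\<gamma> (real k / real N)) \<le> real L * dist t (real k / real N)"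
        using lipschitz_onD[OF Lg t s01] .
      also have "\<dots> \<le> real L * (1 / real N)" using dts by (intro mult_left_mono) auto
      finally show ?thesis by simp
    qed
    have B: "dist (\<beta> (real k / real N)) (\<beta> t) \<le> real L / real N"
    proof -
      have "dist (\<beta> (real k / real N)) (\<beta> t) \<le> real L * dist (real k / real N) t"
        using lipschitz_onD[OF Lb s01 t] .
      also have "\<dots> \<le> real L * (1 / real N)" using dts by (intro mult_left_mono) (auto simp: dist_commute)
      finally show ?thesis by simp
    qed
    have "dist (\<gamma> t) (\<beta> t) \<le> dist (\<gamma> t) (\<gamma> (real k / real N)) + dist (\<gamma> (real k / real N)) (xs ! k)
        + dist (xs ! k) (\<beta> (real k / real N)) + dist (\<beta> (real k / real N)) (\<beta> t)"
      by (smt (verit) dist_triangle)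
    also have "\<dots> \<le> real L / real N + 1 / Suc m + 1 / Suc m + real L / real N"
      using A B pts[OF kN] by (simp add: dist_commute)
    also have "\<dots> \<le> \<delta> / 2" using LN m by linarith
    finally show ?thesis .
  qed
  have "(SUP t\<in>{0..1}. dist (\<gamma> t) (\<beta> t)) \<le> \<delta> / 2"
    using bound by (intro cSUP_least) auto
  also have "\<dots> < \<delta>" using \<delta> by simp
  finally show ?thesis unfolding curve_ball_def lip_curve_def using Lb by blast
qed

lemma ess_part:
  fixes \<mu> :: "'a::metric_space measure" and u :: "'a \<Rightarrow> 'b::metric_space" and Dn :: "'a set"
  assumes mm: "sets \<mu> = sets borel" and p: "p > 0" and Dn: "countable Dn" "\<And>x e. e > 0 \<Longrightarrow> \<exists>y\<in>Dn. dist x y < e"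
  shows "\<exists>E. modulus \<mu> p E = 0 \<and> (\<forall>\<gamma>. lip_curve \<gamma> \<and> \<gamma> \<notin> E \<longrightarrow>
     (\<forall>\<delta>>0. ess_length \<mu> p u (curve_ball \<gamma> \<delta>) \<le> curve_length 0 1 (u \<circ> \<gamma>)))"
proof -
  define Aset where "Aset i = (case i of (L, N, xs, m, q) \<Rightarrow>
     {\<beta> \<in> box L N xs m. curve_length 0 1 (u \<circ> \<beta>) < ennreal (of_rat q)})"
    for i :: "nat \<times> nat \<times> 'a list \<times> nat \<times> rat"
  define I where "I = {i \<in> UNIV \<times> UNIV \<times> lists Dn \<times> UNIV \<times> UNIV. modulus \<mu> p (Aset i) = 0}"
  have cI: "countable I"
  proof (rule countable_subset)
    show "I \<subseteq> UNIV \<times> UNIV \<times> lists Dn \<times> UNIV \<times> UNIV" unfolding I_def by auto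
    show "countable ((UNIV::nat set) \<times> (UNIV::nat set) \<times> lists Dn \<times> (UNIV::nat set) \<times> (UNIV::rat set))"
      using Dn(1) by (intro countable_SIGMA) (auto intro: countableI_type)
  qed
  define E where "E = (\<Union>i\<in>I. Aset i)"
  have E0: "modulus \<mu> p E = 0" unfolding E_def
    by (rule modulus_Union_countable[OF mm p cI]) (auto simp: I_def)
  have "ess_length \<mu> p u (curve_ball \<gamma> \<delta>) \<le> curve_length 0 1 (u \<circ> \<gamma>)"
    if \<gamma>: "lip_curve \<gamma>" "\<gamma> \<notin> E" and \<delta>: "\<delta> > 0" for \<gamma> \<delta>
  proof (rule ccontr)
    assume "\<not> ?thesis"
    then have "curve_length 0 1 (u \<circ> \<gamma>) < ess_length \<mu> p u (curve_ball \<gamma> \<delta>)" by simp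
    then obtain \<Gamma>0 where \<Gamma>0: "modulus \<mu> p \<Gamma>0 = 0"
      and lt: "curve_length 0 1 (u \<circ> \<gamma>) < (INF \<beta>\<in>curve_ball \<gamma> \<delta> - \<Gamma>0. curve_length 0 1 (u \<circ> \<beta>))"
      unfolding ess_length_def less_SUP_iff by blast
    define J where "J = (INF \<beta>\<in>curve_ball \<gamma> \<delta> - \<Gamma>0. curve_length 0 1 (u \<circ> \<beta>))"
    obtain z where z: "curve_length 0 1 (u \<circ> \<gamma>) < z" "z < J" using lt dense unfolding J_def by blast
    obtain l where l: "l \<ge> 0" "curve_length 0 1 (u \<circ> \<gamma>) = ennreal l"
      using z by (cases "curve_length 0 1 (u \<circ> \<gamma>)") (auto simp: top_unique)
    obtain y where y: "y \<ge> 0" "z = ennreal y"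
      using z by (cases z) (auto simp: top_unique)
    have ly: "l < y" using z l y by (simp add: ennreal_less_iff)
    obtain q where q: "l < of_rat q" "of_rat q < y" using of_rat_dense[OF ly] by blast
    have q1: "curve_length 0 1 (u \<circ> \<gamma>) < ennreal (of_rat q)" using q l by (subst l(2)) (rule ennreal_lessI; linarith)
    have q2: "ennreal (of_rat q) < J"
    proof -
      have "ennreal (of_rat q) < ennreal y" using q l by (intro ennreal_lessI) auto
      then show ?thesis using z y by simp
    qed
    obtain L0 where L0: "L0-lipschitz_on {0..1} \<gamma>" using \<gamma> unfolding lip_curve_def by auto
    define Ln where "Ln = nat \<lceil>L0\<rceil>"
    have Ln: "(real Ln)-lipschitz_on {0..1} \<gamma>" unfolding Ln_def
      by (rule lipschitz_on_mono[OF L0]) (auto simp: real_nat_ceiling_ge)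
    define N where "N = nat \<lceil>8 * real Ln / \<delta>\<rceil> + 1"
    have N: "N > 0" unfolding N_def by simp
    have LN: "real Ln / real N \<le> \<delta> / 8"
    proof -
      have "8 * real Ln / \<delta> \<le> real N" unfolding N_def by linarith
      then have "8 * real Ln \<le> real N * \<delta>" using \<delta> by (simp add: divide_le_eq)
      then show ?thesis using N \<delta> by (simp add: divide_le_eq field_simps)
    qed
    define m where "m = nat \<lceil>8 / \<delta>\<rceil>"
    have m: "1 / real (Suc m) \<le> \<delta> / 8"
    proof -
      have "8 / \<delta> \<le> real (Suc m)" unfolding m_def by linarith
      then have "8 \<le> real (Suc m) * \<delta>" using \<delta> by (simp add: divide_le_eq)
      then show ?thesis using \<delta> by (simp add: divide_le_eq field_simps)
    qed
    define pick where "pick k = (SOME y. y \<in> Dn \<and> dist (\<gamma> (real k / real N)) y < 1 / Suc m)" for k :: nat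
    have pick: "pick k \<in> Dn \<and> dist (\<gamma> (real k / real N)) (pick k) < 1 / Suc m" for k
      unfolding pick_def by (rule someI_ex) (use Dn(2)[of "1 / Suc m" "\<gamma> (real k / real N)"] in auto)
    define xs where "xs = map pick [0..<Suc N]"
    have xs: "length xs = Suc N" "xs \<in> lists Dn" "\<And>k. k \<le> N \<Longrightarrow> xs ! k = pick k"
      unfolding xs_def using pick by (auto simp del: upt_Suc simp: nth_append)
    define i where "i = (Ln, N, xs, m, q)"
    have \<gamma>box: "\<gamma> \<in> box Ln N xs m" unfolding box_def using Ln xs pick by auto
    have \<gamma>A: "\<gamma> \<in> Aset i" unfolding Aset_def i_def using \<gamma>box q1 by simp
    have "Aset i \<subseteq> \<Gamma>0"
    proof
      fix \<beta> assume \<beta>: "\<beta> \<in> Aset i"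
      then have \<beta>box: "\<beta> \<in> box Ln N xs m" and \<beta>l: "curve_length 0 1 (u \<circ> \<beta>) < ennreal (of_rat q)"
        unfolding Aset_def i_def by auto
      have "\<beta> \<in> curve_ball \<gamma> \<delta>" by (rule box_sub[OF \<gamma>box \<beta>box N \<delta> LN m])
      show "\<beta> \<in> \<Gamma>0"
      proof (rule ccontr)
        assume "\<beta> \<notin> \<Gamma>0"
        then have "J \<le> curve_length 0 1 (u \<circ> \<beta>)" unfolding J_def
          using \<open>\<beta> \<in> curve_ball \<gamma> \<delta>\<close> by (intro INF_lower) auto
        then show False using \<beta>l q2 by simp
      qed
    qed
    then have "modulus \<mu> p (Aset i) \<le> modulus \<mu> p \<Gamma>0" by (rule modulus_mono)
    then have "modulus \<mu> p (Aset i) = 0" using \<Gamma>0 by simp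
    then have "i \<in> I" unfolding I_def i_def using xs(2) by simp
    then have "\<gamma> \<in> E" using \<gamma>A unfolding E_def by blast
    then show False using \<gamma> by simp
  qed
  then show ?thesis using E0 by blast
qed

lemma abs_cont_iso:
  assumes "isometric \<iota>" "abs_continuous_on S (\<iota> \<circ> u \<circ> \<gamma>)"
  shows "abs_continuous_on S (u \<circ> \<gamma>)"
  using assms unfolding abs_continuous_on_def isometric_def by simp

theorem proposition5p5:
  fixes \<mu> :: "'a::metric_space measure"
    and u :: "'a \<Rightarrow> 'b::complete_space"
    and \<iota> :: "'b \<Rightarrow> 'c::banach"
    and p :: real
  assumes "metric_measure_space \<mu>"
    and "p \<ge> 1"
    and "isometric \<iota>"
    and "newtonian_loc \<mu> p (\<iota> \<circ> u)"
  shows "\<exists>\<Gamma>0. modulus \<mu> p \<Gamma>0 = 0 \<and> (\<forall>\<gamma>. lip_curve \<gamma> \<and> \<gamma> \<notin> \<Gamma>0 \<longrightarrow> regular_curve \<mu> p u \<gamma>)"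
proof -
  have pr: "proper_space TYPE('a)" and mm: "sets \<mu> = sets borel"
    using assms(1) unfolding metric_measure_space_def by auto
  have p: "p > 0" using assms(2) by simp
  define f where "f = \<iota> \<circ> u"
  obtain r where r: "\<And>x. r x > 0" "\<And>x. newtonian \<mu> p (ball x (r x)) f"
    using assms(4) unfolding newtonian_loc_def f_def by metis
  obtain \<rho> where \<rho>: "\<And>x. \<rho> x \<in> borel_measurable borel" "\<And>x. upper_gradient (ball x (r x)) f (\<rho> x)"
    "\<And>x. (\<integral>\<^sup>+ y \<in> ball x (r x). enn_powr (\<rho> x y) p \<partial>\<mu>) < \<infinity>"
    using r(2) unfolding newtonian_def by metis
  define g where "g c y = \<rho> c y * indicator (ball c (r c)) y" for c y
  have gm: "g c \<in> borel_measurable borel" for c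
  proof -
    have [measurable]: "ball c (r c) \<in> sets borel" by auto
    show ?thesis unfolding g_def using \<rho>(1)[of c] by measurable
  qed
  have gfin: "(\<integral>\<^sup>+ y. enn_powr (g c y) p \<partial>\<mu>) < \<infinity>" for c
    unfolding g_def using \<rho>(3)[of c] p by (simp add: enn_powr_indicator)
  define \<Gamma>c where "\<Gamma>c c = {\<gamma>. lip_curve \<gamma> \<and> line_integral (g c) \<gamma> = \<infinity>}" for c
  have \<Gamma>c0: "modulus \<mu> p (\<Gamma>c c) = 0" for c
    unfolding \<Gamma>c_def by (rule modulus_bad_zero[OF mm p gm gfin])
  define x0 :: 'a where "x0 = undefined"
  have "\<exists>T. finite T \<and> cball x0 (real n) \<subseteq> (\<Union>c\<in>T. ball c (r c))" for n :: nat
  proof -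
    have cmp: "compact (cball x0 (real n))" using pr unfolding proper_space_def by auto
    have cov: "cball x0 (real n) \<subseteq> (\<Union>c\<in>cball x0 (real n). ball c (r c))" using r(1) by auto
    obtain T where "T \<subseteq> cball x0 (real n)" "finite T" "cball x0 (real n) \<subseteq> (\<Union>c\<in>T. ball c (r c))"
      using compactE_image[OF cmp _ cov] by auto
    then show ?thesis by blast
  qed
  then obtain T where T: "\<And>n. finite (T n)" "\<And>n. cball x0 (real n) \<subseteq> (\<Union>c\<in>T n. ball c (r c))"
    by metis
  define Cs where "Cs = (\<Union>n. T n)"
  have cCs: "countable Cs" unfolding Cs_def by (intro countable_UN) (auto intro: countable_finite[OF T(1)])
  define \<Gamma>ac where "\<Gamma>ac = (\<Union>c\<in>Cs. \<Gamma>c c)"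
  have \<Gamma>ac0: "modulus \<mu> p \<Gamma>ac = 0" unfolding \<Gamma>ac_def
    by (rule modulus_Union_countable[OF mm p cCs \<Gamma>c0])
  have ac: "abs_continuous_on {0..1} (u \<circ> \<gamma>)" if \<gamma>: "lip_curve \<gamma>" "\<gamma> \<notin> \<Gamma>ac" for \<gamma>
  proof -
    have "compact (\<gamma> ` {0..1})" using lip_curve_cont[OF \<gamma>(1)] by (intro compact_continuous_image) auto
    then have "bounded (\<gamma> ` {0..1})" by (rule compact_imp_bounded)
    then obtain e where e: "\<forall>y\<in>\<gamma> ` {0..1}. dist x0 y \<le> e" using bounded_any_center by blast
    obtain n :: nat where n: "e \<le> real n" using real_arch_simple by blast
    have sub: "\<gamma> ` {0..1} \<subseteq> (\<Union>c\<in>T n. ball c (r c))"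
    proof -
      have "\<gamma> ` {0..1} \<subseteq> cball x0 (real n)" using e n by (auto simp: mem_cball)
      then show ?thesis using T(2)[of n] by blast
    qed
    have "abs_continuous_on {0..1} (f \<circ> \<gamma>)"
    proof (rule ac_main[OF \<gamma>(1) T(1) sub])
      fix c assume c: "c \<in> T n"
      show "upper_gradient (ball c (r c)) f (\<rho> c)" by (rule \<rho>(2))
      show "\<rho> c \<in> borel_measurable borel" by (rule \<rho>(1))
      have "c \<in> Cs" using c unfolding Cs_def by auto
      then have "\<gamma> \<notin> \<Gamma>c c" using \<gamma>(2) unfolding \<Gamma>ac_def by auto
      then have "line_integral (g c) \<gamma> \<noteq> \<infinity>" using \<gamma>(1) unfolding \<Gamma>c_def by auto
      then show "line_integral (\<lambda>x. \<rho> c x * indicator (ball c (r c)) x) \<gamma> < \<infinity>"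
        unfolding g_def by (simp add: top.not_eq_extremum)
    qed
    then show ?thesis using abs_cont_iso[OF assms(3)] unfolding f_def by (simp add: comp_assoc)
  qed
  obtain Dn :: "'a set" where Dn: "countable Dn" "\<And>x e. e > 0 \<Longrightarrow> \<exists>y\<in>Dn. dist x y < e"
    using proper_dense[OF pr] by metis
  obtain E where E: "modulus \<mu> p E = 0" "\<And>\<gamma>. lip_curve \<gamma> \<Longrightarrow> \<gamma> \<notin> E \<Longrightarrow>
     (\<forall>\<delta>>0. ess_length \<mu> p u (curve_ball \<gamma> \<delta>) \<le> curve_length 0 1 (u \<circ> \<gamma>))"
    using ess_part[OF mm p Dn, of u] by blast
  have "modulus \<mu> p (\<Union>X\<in>{\<Gamma>ac, E}. X) = 0"
    by (rule modulus_Union_countable[OF mm p]) (use \<Gamma>ac0 E(1) in auto)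
  then have "modulus \<mu> p (\<Gamma>ac \<union> E) = 0" by simp
  moreover have "regular_curve \<mu> p u \<gamma>" if "lip_curve \<gamma>" "\<gamma> \<notin> \<Gamma>ac \<union> E" for \<gamma>
    unfolding regular_curve_def using that ac E(2) by auto
  ultimately show ?thesis by blast
qed


end
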